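(* An effect algebra $A$ is (the effect algebra of) a Boolean algebra if and only if the category $\int R(A)$ is filtered.
   Context: An effect algebra is a partial algebra $(A;+,0,1)$, with a binary partial operation $+$ and constants $0,1$, satisfying: (E1) if $a+b$ is defined, then $b+a$ is defined and $a+b=b+a$; (E2) if $a+b$ and $(a+b)+c$ are defined, then $b+c$ and $a+(b+c)$ are defined and $(a+b)+c=a+(b+c)$; (E3) for every $a$ there is a unique $a^\perp$ such that $a+a^\perp=1$; (E4) if $a+1$ is defined, then $a=0$. One-element effect algebras are allowed. Morphisms of effect algebras preserve $1$ and defined sums. Every Boolean algebra is an effect algebra via: $x+y$ is defined iff $x\wedge y=0$, and then $x+y=x\vee y$. "$A$ is a Boolean algebra" means $A$ arises this way from a Boolean algebra. For $[n]=\{1,\dots,n\}$, $\mathbf{FinBool}$ is the full subcategory of Boolean algebras on the objects $2^{[n]}$, $n\in\mathbb N$. The category $\int R(A)$ has: - objects: pairs $(2^{[n]},g)$ with $g\colon 2^{[n]}\to A$ an effect-algebra morphism; - arrows $(2^{[n]},g)\to(2^{[n']},g')$: Boolean algebra morphisms $f\colon 2^{[n]}\to 2^{[n']}$ with $g'\circ f=g$. A category is filtered if it satisfies all three of: - it is nonempty; - every two objects admit a cospan $X_1\to X\leftarrow X_2$; - every parallel pair $f_1,f_2\colon X\to Y$ admits $q\colon Y\to Z$ with $q\circ f_1=q\circ f_2$. *)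

theory Defs
  imports Main
begin

text \<open>An effect algebra is given by a carrier set A, a partial binary operation
  (as an option-valued function: None = undefined), and constants z (zero), u (one).\<close>

definition effect_algebra ::
  "'a set \<Rightarrow> ('a \<Rightarrow> 'a \<Rightarrow> 'a option) \<Rightarrow> 'a \<Rightarrow> 'a \<Rightarrow> bool" where
  "effect_algebra A pl z u \<longleftrightarrow>
     z \<in> A \<and> u \<in> A \<and>
     (\<forall>a\<in>A. \<forall>b\<in>A. \<forall>c. pl a b = Some c \<longrightarrow> c \<in> A) \<and>
     \<comment> \<open>(E1)\<close>
     (\<forall>a\<in>A. \<forall>b\<in>A. \<forall>c. pl a b = Some c \<longrightarrow> pl b a = Some c) \<and>
     \<comment> \<open>(E2)\<close>
     (\<forall>a\<in>A. \<forall>b\<in>A. \<forall>c\<in>A. \<forall>d e. pl a b = Some d \<and> pl d c = Some e \<longrightarrow>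
        (\<exists>f. pl b c = Some f \<and> pl a f = Some e)) \<and>
     \<comment> \<open>(E3)\<close>
     (\<forall>a\<in>A. \<exists>!b. b \<in> A \<and> pl a b = Some u) \<and>
     \<comment> \<open>(E4)\<close>
     (\<forall>a\<in>A. pl a u \<noteq> None \<longrightarrow> a = z)"

definition boolean_algebra_on ::
  "'a set \<Rightarrow> ('a \<Rightarrow> 'a \<Rightarrow> 'a) \<Rightarrow> ('a \<Rightarrow> 'a \<Rightarrow> 'a) \<Rightarrow> ('a \<Rightarrow> 'a) \<Rightarrow> 'a \<Rightarrow> 'a \<Rightarrow> bool" where
  "boolean_algebra_on A mt jn cp bt tp \<longleftrightarrow>
     bt \<in> A \<and> tp \<in> A \<and>
     (\<forall>x\<in>A. \<forall>y\<in>A. mt x y \<in> A \<and> jn x y \<in> A) \<and> (\<forall>x\<in>A. cp x \<in> A) \<and>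
     (\<forall>x\<in>A. \<forall>y\<in>A. mt x y = mt y x \<and> jn x y = jn y x) \<and>
     (\<forall>x\<in>A. \<forall>y\<in>A. \<forall>w\<in>A. mt (mt x y) w = mt x (mt y w) \<and> jn (jn x y) w = jn x (jn y w)) \<and>
     (\<forall>x\<in>A. \<forall>y\<in>A. mt x (jn x y) = x \<and> jn x (mt x y) = x) \<and>
     (\<forall>x\<in>A. \<forall>y\<in>A. \<forall>w\<in>A. mt x (jn y w) = jn (mt x y) (mt x w)) \<and>
     (\<forall>x\<in>A. jn x bt = x \<and> mt x tp = x) \<and>
     (\<forall>x\<in>A. mt x (cp x) = bt \<and> jn x (cp x) = tp)"

definition is_boolean_EA ::
  "'a set \<Rightarrow> ('a \<Rightarrow> 'a \<Rightarrow> 'a option) \<Rightarrow> 'a \<Rightarrow> 'a \<Rightarrow> bool" where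
  "is_boolean_EA A pl z u \<longleftrightarrow>
     (\<exists>mt jn cp bt tp. boolean_algebra_on A mt jn cp bt tp \<and> bt = z \<and> tp = u \<and>
        (\<forall>x\<in>A. \<forall>y\<in>A. pl x y = (if mt x y = bt then Some (jn x y) else None)))"

text \<open>The object 2^[n] of FinBool is the powerset of {1..n} with the usual operations.\<close>

definition ea_mor_fin ::
  "'a set \<Rightarrow> ('a \<Rightarrow> 'a \<Rightarrow> 'a option) \<Rightarrow> 'a \<Rightarrow> nat \<Rightarrow> (nat set \<Rightarrow> 'a) \<Rightarrow> bool" where
  "ea_mor_fin A pl u n g \<longleftrightarrow>
     (\<forall>X. X \<subseteq> {1..n} \<longrightarrow> g X \<in> A) \<and> g {1..n} = u \<and>
     (\<forall>X Y. X \<subseteq> {1..n} \<and> Y \<subseteq> {1..n} \<and> X \<inter> Y = {} \<longrightarrow> pl (g X) (g Y) = Some (g (X \<union> Y)))"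

definition bool_mor_fin :: "nat \<Rightarrow> nat \<Rightarrow> (nat set \<Rightarrow> nat set) \<Rightarrow> bool" where
  "bool_mor_fin n m f \<longleftrightarrow>
     (\<forall>X. X \<subseteq> {1..n} \<longrightarrow> f X \<subseteq> {1..m}) \<and>
     f {} = {} \<and> f {1..n} = {1..m} \<and>
     (\<forall>X Y. X \<subseteq> {1..n} \<and> Y \<subseteq> {1..n} \<longrightarrow>
        f (X \<inter> Y) = f X \<inter> f Y \<and> f (X \<union> Y) = f X \<union> f Y) \<and>
     (\<forall>X. X \<subseteq> {1..n} \<longrightarrow> f ({1..n} - X) = {1..m} - f X)"

text \<open>Arrows (2^[n], g) \<rightarrow> (2^[m], h) in \<int>R(A).\<close>
definition intR_arrow ::
  "nat \<Rightarrow> (nat set \<Rightarrow> 'a) \<Rightarrow> nat \<Rightarrow> (nat set \<Rightarrow> 'a) \<Rightarrow> (nat set \<Rightarrow> nat set) \<Rightarrow> bool" where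
  "intR_arrow n g m h f \<longleftrightarrow> bool_mor_fin n m f \<and> (\<forall>X. X \<subseteq> {1..n} \<longrightarrow> h (f X) = g X)"

definition intR_filtered ::
  "'a set \<Rightarrow> ('a \<Rightarrow> 'a \<Rightarrow> 'a option) \<Rightarrow> 'a \<Rightarrow> bool" where
  "intR_filtered A pl u \<longleftrightarrow>
     (\<exists>n g. ea_mor_fin A pl u n g) \<and>
     (\<forall>n1 g1 n2 g2. ea_mor_fin A pl u n1 g1 \<and> ea_mor_fin A pl u n2 g2 \<longrightarrow>
        (\<exists>n g f1 f2. ea_mor_fin A pl u n g \<and>
           intR_arrow n1 g1 n g f1 \<and> intR_arrow n2 g2 n g f2)) \<and>
     (\<forall>n g m h f1 f2. ea_mor_fin A pl u n g \<and> ea_mor_fin A pl u m h \<and>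
        intR_arrow n g m h f1 \<and> intR_arrow n g m h f2 \<longrightarrow>
        (\<exists>k l q. ea_mor_fin A pl u k l \<and> intR_arrow m h k l q \<and>
           (\<forall>X. X \<subseteq> {1..n} \<longrightarrow> q (f1 X) = q (f2 X))))"

end

theory Submission
  imports Defs
begin


locale ba =
  fixes A :: "'a set" and mt jn :: "'a \<Rightarrow> 'a \<Rightarrow> 'a" and cp :: "'a \<Rightarrow> 'a" and bt tp :: 'a
  assumes ba: "boolean_algebra_on A mt jn cp bt tp"
begin

lemma bt_in[simp]: "bt \<in> A" and tp_in[simp]: "tp \<in> A"
  and mt_in[simp]: "x \<in> A \<Longrightarrow> y \<in> A \<Longrightarrow> mt x y \<in> A"
  and jn_in[simp]: "x \<in> A \<Longrightarrow> y \<in> A \<Longrightarrow> jn x y \<in> A"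
  and cp_in[simp]: "x \<in> A \<Longrightarrow> cp x \<in> A"
  and mt_comm: "x \<in> A \<Longrightarrow> y \<in> A \<Longrightarrow> mt x y = mt y x"
  and jn_comm: "x \<in> A \<Longrightarrow> y \<in> A \<Longrightarrow> jn x y = jn y x"
  and mt_assoc: "x \<in> A \<Longrightarrow> y \<in> A \<Longrightarrow> w \<in> A \<Longrightarrow> mt (mt x y) w = mt x (mt y w)"
  and jn_assoc: "x \<in> A \<Longrightarrow> y \<in> A \<Longrightarrow> w \<in> A \<Longrightarrow> jn (jn x y) w = jn x (jn y w)"
  and absorb1: "x \<in> A \<Longrightarrow> y \<in> A \<Longrightarrow> mt x (jn x y) = x"
  and absorb2: "x \<in> A \<Longrightarrow> y \<in> A \<Longrightarrow> jn x (mt x y) = x"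
  and distrib: "x \<in> A \<Longrightarrow> y \<in> A \<Longrightarrow> w \<in> A \<Longrightarrow> mt x (jn y w) = jn (mt x y) (mt x w)"
  and jn_bt[simp]: "x \<in> A \<Longrightarrow> jn x bt = x"
  and mt_tp[simp]: "x \<in> A \<Longrightarrow> mt x tp = x"
  and mt_cp[simp]: "x \<in> A \<Longrightarrow> mt x (cp x) = bt"
  and jn_cp[simp]: "x \<in> A \<Longrightarrow> jn x (cp x) = tp"
  using ba unfolding boolean_algebra_on_def by auto

lemma mt_idem[simp]: "x \<in> A \<Longrightarrow> mt x x = x"
  by (metis absorb1 absorb2 mt_in)

lemma jn_idem[simp]: "x \<in> A \<Longrightarrow> jn x x = x"
  by (metis absorb1 absorb2 jn_in)

lemma bt_jn[simp]: "x \<in> A \<Longrightarrow> jn bt x = x"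
  by (metis jn_bt jn_comm bt_in)

lemma tp_mt[simp]: "x \<in> A \<Longrightarrow> mt tp x = x"
  by (metis mt_tp mt_comm tp_in)

lemma bt_mt0[simp]: "x \<in> A \<Longrightarrow> mt bt x = bt"
  by (metis absorb2 bt_in bt_jn mt_in)

lemma mt_bt[simp]: "x \<in> A \<Longrightarrow> mt x bt = bt"
  by (metis bt_mt0 mt_comm bt_in)

lemma distrib2: "x \<in> A \<Longrightarrow> y \<in> A \<Longrightarrow> w \<in> A \<Longrightarrow> mt (jn y w) x = jn (mt y x) (mt w x)"
  by (simp add: distrib mt_comm)

lemma jn_lcomm: "x \<in> A \<Longrightarrow> y \<in> A \<Longrightarrow> w \<in> A \<Longrightarrow> jn x (jn y w) = jn y (jn x w)"
  by (metis jn_assoc jn_comm)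

lemma mt_lcomm: "x \<in> A \<Longrightarrow> y \<in> A \<Longrightarrow> w \<in> A \<Longrightarrow> mt x (mt y w) = mt y (mt x w)"
  by (metis mt_assoc mt_comm)

lemma jn4: "P \<in> A \<Longrightarrow> Q \<in> A \<Longrightarrow> a \<in> A \<Longrightarrow> b \<in> A \<Longrightarrow> jn (jn P a) (jn Q b) = jn (jn P Q) (jn a b)"
  by (simp add: jn_assoc jn_lcomm)

lemma mt4: "P \<in> A \<Longrightarrow> Q \<in> A \<Longrightarrow> a \<in> A \<Longrightarrow> b \<in> A \<Longrightarrow> mt (mt P a) (mt Q b) = mt (mt P Q) (mt a b)"
  by (simp add: mt_assoc mt_lcomm)

lemma mt_jn4: "P \<in> A \<Longrightarrow> Q \<in> A \<Longrightarrow> a \<in> A \<Longrightarrow> b \<in> A \<Longrightarrow>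
  mt (jn P a) (jn Q b) = jn (jn (mt P Q) (mt P b)) (jn (mt a Q) (mt a b))"
  by (simp add: distrib distrib2 jn4)

lemma meet_hom_aux: "x \<in> A \<Longrightarrow> y \<in> A \<Longrightarrow> c \<in> A \<Longrightarrow> mt x y = bt \<Longrightarrow> mt x c = bt \<Longrightarrow> mt y c = bt
  \<Longrightarrow> mt (jn x c) (jn y c) = c"
  by (simp add: mt_jn4 mt_comm[of c])

end


lemma enc_inj0:
  fixes i j i' j' n1 :: nat
  assumes h: "1 \<le> i" "i \<le> n1" "1 \<le> j" "1 \<le> i'" "i' \<le> n1" "1 \<le> j'"
     and e: "i + n1 * (j - 1) = i' + n1 * (j' - 1)"
  shows "i = i' \<and> j = j'"
proof -
  have e2: "(i - 1) + n1 * (j - 1) = (i' - 1) + n1 * (j' - 1)" using e h by simp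
  have "((i - 1) + n1 * (j - 1)) mod n1 = i - 1" using h by (simp only: mod_mult_self2) simp
  moreover have "((i' - 1) + n1 * (j' - 1)) mod n1 = i' - 1" using h by (simp only: mod_mult_self2) simp
  ultimately have ii: "i = i'" using e2 h by simp
  then have "n1 * (j - 1) = n1 * (j' - 1)" using e2 by simp
  moreover have "n1 > 0" using h by simp
  ultimately have "j - 1 = j' - 1" by simp
  then show ?thesis using ii h by simp
qed

lemma enc_inj: "inj_on (\<lambda>(i,j). i + n1*(j-1::nat)) ({1..n1}\<times>{1..n2})"
proof (rule inj_onI)
  fix x y assume x: "x \<in> {1..n1}\<times>{1..n2}" and y: "y \<in> {1..n1}\<times>{1..n2}"
    and e: "(\<lambda>(i,j). i + n1*(j-1::nat)) x = (\<lambda>(i,j). i + n1*(j-1::nat)) y"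
  obtain i j where xi: "x = (i,j)" by (cases x)
  obtain i' j' where yi: "y = (i',j')" by (cases y)
  show "x = y" using enc_inj0[of i n1 j i' j'] x y e unfolding xi yi by simp
qed

lemma enc_le:
  fixes i j n1 n2 :: nat
  assumes h: "1 \<le> i" "i \<le> n1" "1 \<le> j" "j \<le> n2"
  shows "i + n1 * (j - 1) \<le> n1 * n2"
proof -
  have "i + n1 * (j - 1) \<le> n1 + n1 * (j - 1)" using h by simp
  also have "\<dots> = n1 * j" using h by (cases j) auto
  also have "\<dots> \<le> n1 * n2" using h by simp
  finally show ?thesis .
qed

lemma enc_img: "(\<lambda>(i,j). i + n1*(j-1::nat)) ` ({1..n1}\<times>{1..n2}) = {1..n1*n2}"
proof
  show "(\<lambda>(i,j). i + n1*(j-1::nat)) ` ({1..n1}\<times>{1..n2}) \<subseteq> {1..n1*n2}"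
  proof
    fix s assume "s \<in> (\<lambda>(i,j). i + n1*(j-1::nat)) ` ({1..n1}\<times>{1..n2})"
    then obtain i j where "i \<in> {1..n1}" "j \<in> {1..n2}" "s = i + n1*(j-1)" by auto
    then show "s \<in> {1..n1*n2}" using enc_le[of i n1 j n2] by simp
  qed
next
  show "{1..n1*n2} \<subseteq> (\<lambda>(i,j). i + n1*(j-1::nat)) ` ({1..n1}\<times>{1..n2})"
  proof
    fix s assume s: "s \<in> {1..n1*n2}"
    then have n1: "n1 > 0" by (cases n1) auto
    define i where "i = (s - 1) mod n1 + 1"
    define j where "j = (s - 1) div n1 + 1"
    have "s - 1 = (s-1) mod n1 + n1 * ((s-1) div n1)" by simp
    then have "s = i + n1 * (j - 1)" using s unfolding i_def j_def by simp
    moreover have "i \<in> {1..n1}" unfolding i_def using n1 by (simp add: Suc_leI)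
    moreover have "j \<in> {1..n2}"
    proof -
      have "s - 1 < n2 * n1" using s by (auto simp: mult.commute)
      then have "(s - 1) div n1 < n2" by (rule less_mult_imp_div_less)
      then show ?thesis unfolding j_def by simp
    qed
    ultimately show "s \<in> (\<lambda>(i,j). i + n1*(j-1::nat)) ` ({1..n1}\<times>{1..n2})" by force
  qed
qed


fun JJ :: "('a \<Rightarrow> 'a \<Rightarrow> 'a) \<Rightarrow> 'a \<Rightarrow> (nat \<Rightarrow> 'a) \<Rightarrow> nat \<Rightarrow> 'a" where
  "JJ jn bt f 0 = bt"
| "JJ jn bt f (Suc m) = jn (JJ jn bt f m) (f (Suc m))"

locale bea = ba +
  fixes pl :: "'a \<Rightarrow> 'a \<Rightarrow> 'a option"
  assumes pl_def: "x \<in> A \<Longrightarrow> y \<in> A \<Longrightarrow> pl x y = (if mt x y = bt then Some (jn x y) else None)"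
begin

abbreviation mor where "mor n g \<equiv> ea_mor_fin A pl tp n g"

lemma mor_in: "mor n g \<Longrightarrow> X \<subseteq> {1..n} \<Longrightarrow> g X \<in> A"
  unfolding ea_mor_fin_def by auto

lemma mor_top: "mor n g \<Longrightarrow> g {1..n} = tp"
  unfolding ea_mor_fin_def by auto

lemma mor_disj:
  assumes "mor n g" "X \<subseteq> {1..n}" "Y \<subseteq> {1..n}" "X \<inter> Y = {}"
  shows "mt (g X) (g Y) = bt" "g (X \<union> Y) = jn (g X) (g Y)"
proof -
  have "pl (g X) (g Y) = Some (g (X \<union> Y))" using assms unfolding ea_mor_fin_def by auto
  then show "mt (g X) (g Y) = bt" "g (X \<union> Y) = jn (g X) (g Y)"
    using pl_def[of "g X" "g Y"] mor_in[OF assms(1)] assms(2,3) by (auto split: if_splits)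
qed

lemma mor_empty: "mor n g \<Longrightarrow> g {} = bt"
  using mor_disj(1)[of n g "{}" "{}"] mor_in[of n g "{}"] by simp

lemma mor_meet:
  assumes m: "mor n g" and X: "X \<subseteq> {1..n}" and Y: "Y \<subseteq> {1..n}"
  shows "g (X \<inter> Y) = mt (g X) (g Y)"
proof -
  have ins: "g (X - Y) \<in> A" "g (Y - X) \<in> A" "g (X \<inter> Y) \<in> A" "g X \<in> A" "g Y \<in> A"
    using X Y by (auto intro!: mor_in[OF m])
  have gx: "g X = jn (g (X - Y)) (g (X \<inter> Y))"
  proof -
    have "g ((X - Y) \<union> (X \<inter> Y)) = jn (g (X - Y)) (g (X \<inter> Y))"
      by (rule mor_disj(2)[OF m]) (use X in auto)
    then show ?thesis by (simp add: Un_Diff_Int)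
  qed
  have gy: "g Y = jn (g (Y - X)) (g (X \<inter> Y))"
  proof -
    have "g ((Y - X) \<union> (X \<inter> Y)) = jn (g (Y - X)) (g (X \<inter> Y))"
      by (rule mor_disj(2)[OF m]) (use Y in auto)
    moreover have "(Y - X) \<union> (X \<inter> Y) = Y" by blast
    ultimately show ?thesis by simp
  qed
  have d1: "mt (g (X - Y)) (g (Y - X)) = bt" using mor_disj(1)[OF m, of "X - Y" "Y - X"] X Y by auto
  have d2: "mt (g (X - Y)) (g (X \<inter> Y)) = bt" using mor_disj(1)[OF m, of "X - Y" "X \<inter> Y"] X Y by auto
  have d3: "mt (g (Y - X)) (g (X \<inter> Y)) = bt" using mor_disj(1)[OF m, of "Y - X" "X \<inter> Y"] X Y by auto
  show ?thesis unfolding gx gy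
    by (rule meet_hom_aux[symmetric]) (use d1 d2 d3 ins in auto)
qed

lemma mor_union:
  assumes m: "mor n g" and X: "X \<subseteq> {1..n}" and Y: "Y \<subseteq> {1..n}"
  shows "g (X \<union> Y) = jn (g X) (g Y)"
proof -
  have ins: "g (X - Y) \<in> A" "g (Y - X) \<in> A" "g (X \<inter> Y) \<in> A" "g X \<in> A" "g Y \<in> A"
    using X Y by (auto intro!: mor_in[OF m])
  have gx: "g X = jn (g (X - Y)) (g (X \<inter> Y))"
  proof -
    have "g ((X - Y) \<union> (X \<inter> Y)) = jn (g (X - Y)) (g (X \<inter> Y))"
      by (rule mor_disj(2)[OF m]) (use X in auto)
    then show ?thesis by (simp add: Un_Diff_Int)
  qed
  have gy: "g (X \<union> Y) = jn (g (X - Y)) (g Y)"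
  proof -
    have "g ((X - Y) \<union> Y) = jn (g (X - Y)) (g Y)"
      by (rule mor_disj(2)[OF m]) (use X Y in auto)
    moreover have "(X - Y) \<union> Y = X \<union> Y" by blast
    ultimately show ?thesis by simp
  qed
  have "jn (g X) (g Y) = jn (g (X - Y)) (jn (g (X \<inter> Y)) (g Y))"
    unfolding gx by (rule jn_assoc) (use ins in auto)
  also have "jn (g (X \<inter> Y)) (g Y) = g Y"
    using mor_meet[OF m X Y] by (metis X Y absorb2 jn_comm m mor_in mt_comm mt_in)
  finally show ?thesis using gy by simp
qed

lemma mor_gen:
  assumes "\<And>X. X \<subseteq> {1..n} \<Longrightarrow> g X \<in> A" "g {1..n} = tp"
   "\<And>X Y. X \<subseteq> {1..n} \<Longrightarrow> Y \<subseteq> {1..n} \<Longrightarrow> X \<inter> Y = {} \<Longrightarrow> mt (g X) (g Y) = bt \<and> g (X \<union> Y) = jn (g X) (g Y)"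
  shows "mor n g"
  unfolding ea_mor_fin_def using assms pl_def by auto

abbreviation J where "J \<equiv> JJ jn bt"

lemma J_in: "(\<And>j. j \<in> {1..m} \<Longrightarrow> f j \<in> A) \<Longrightarrow> J f m \<in> A"
  by (induction m) auto

lemma J_cong: "(\<And>j. j \<in> {1..m} \<Longrightarrow> f j = f' j) \<Longrightarrow> J f m = J f' m"
  by (induction m) auto

lemma J_jn: "(\<And>j. j \<in> {1..m} \<Longrightarrow> f j \<in> A) \<Longrightarrow> (\<And>j. j \<in> {1..m} \<Longrightarrow> f' j \<in> A) \<Longrightarrow>
   J (\<lambda>j. jn (f j) (f' j)) m = jn (J f m) (J f' m)"
proof (induction m)
  case 0 then show ?case by simp
next
  case (Suc m)
  have "J f m \<in> A" "J f' m \<in> A" using Suc.prems by (auto intro!: J_in)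
  then show ?case using Suc by (simp add: jn4)
qed

lemma J_mt: "c \<in> A \<Longrightarrow> (\<And>j. j \<in> {1..m} \<Longrightarrow> f j \<in> A) \<Longrightarrow>
   J (\<lambda>j. mt c (f j)) m = mt c (J f m)"
proof (induction m)
  case 0 then show ?case by simp
next
  case (Suc m)
  have "J f m \<in> A" using Suc.prems by (auto intro!: J_in)
  then show ?case using Suc by (simp add: distrib)
qed

lemma J_disj1: "b \<in> A \<Longrightarrow> (\<And>j. j \<in> {1..m} \<Longrightarrow> f j \<in> A) \<Longrightarrow> (\<And>j. j \<in> {1..m} \<Longrightarrow> mt (f j) b = bt) \<Longrightarrow>
   mt (J f m) b = bt"
proof (induction m)
  case 0 then show ?case by simp
next
  case (Suc m)
  have "J f m \<in> A" using Suc.prems by (auto intro!: J_in)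
  then show ?case using Suc by (simp add: distrib2)
qed

lemma J_disj: "(\<And>j. j \<in> {1..m} \<Longrightarrow> f j \<in> A) \<Longrightarrow> (\<And>j. j \<in> {1..m} \<Longrightarrow> f' j \<in> A) \<Longrightarrow>
   (\<And>j l. j \<in> {1..m} \<Longrightarrow> l \<in> {1..m} \<Longrightarrow> mt (f j) (f' l) = bt) \<Longrightarrow>
   mt (J f m) (J f' m) = bt"
proof (induction m)
  case 0 then show ?case by simp
next
  case (Suc m)
  have i: "J f m \<in> A" "J f' m \<in> A" using Suc.prems by (auto intro!: J_in)
  have a: "mt (J f m) (f' (Suc m)) = bt"
    by (rule J_disj1) (use Suc.prems in auto)
  have b: "mt (J f' m) (f (Suc m)) = bt"
  proof (rule J_disj1)
    fix j assume j: "j \<in> {1..m}"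
    have "mt (f' j) (f (Suc m)) = mt (f (Suc m)) (f' j)" using j Suc.prems by (intro mt_comm) auto
    also have "\<dots> = bt" using j Suc.prems by auto
    finally show "mt (f' j) (f (Suc m)) = bt" .
  qed (use Suc.prems in auto)
  have c: "mt (J f m) (J f' m) = bt" using Suc by auto
  show ?case using i a b c Suc.prems by (simp add: mt_jn4 mt_comm[of "f (Suc m)"])
qed

lemma J_mor: "mor n h \<Longrightarrow> m \<le> n \<Longrightarrow> J (\<lambda>j. if j \<in> T then h {j} else bt) m = h (T \<inter> {1..m})"
proof (induction m)
  case 0 then show ?case by (simp add: mor_empty)
next
  case (Suc m)
  have e: "T \<inter> {1..Suc m} = (T \<inter> {1..m}) \<union> (if Suc m \<in> T then {Suc m} else {})"
    by (auto simp: le_Suc_eq)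
  show ?case
  proof (cases "Suc m \<in> T")
    case True
    have eT: "T \<inter> {1..Suc m} = (T \<inter> {1..m}) \<union> {Suc m}" using True by (auto simp: le_Suc_eq)
    have "J (\<lambda>j. if j \<in> T then h {j} else bt) (Suc m) = jn (J (\<lambda>j. if j \<in> T then h {j} else bt) m) (h {Suc m})"
      using True by simp
    also have "\<dots> = jn (h (T \<inter> {1..m})) (h {Suc m})" using Suc by simp
    also have "\<dots> = h ((T \<inter> {1..m}) \<union> {Suc m})"
      by (rule mor_disj(2)[symmetric]) (use Suc.prems in auto)
    also have "\<dots> = h (T \<inter> {1..Suc m})" using eT by simp
    finally show ?thesis .
  next
    case False
    have eT: "T \<inter> {1..Suc m} = T \<inter> {1..m}" using False by (auto simp: le_Suc_eq)
    have "h (T \<inter> {1..m}) \<in> A" using Suc.prems by (intro mor_in) auto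
    then show ?thesis unfolding eT using Suc False by simp
  qed
qed

end


lemma bool_mor_img:
  assumes inj: "inj_on en B" and img: "en ` B = {1..k}"
    and R1: "\<And>X. X \<subseteq> {1..n} \<Longrightarrow> R X \<subseteq> B" and R2: "R {} = {}" and R3: "R {1..n} = B"
    and R4: "\<And>X Y. X \<subseteq> {1..n} \<Longrightarrow> Y \<subseteq> {1..n} \<Longrightarrow> R (X \<inter> Y) = R X \<inter> R Y \<and> R (X \<union> Y) = R X \<union> R Y"
    and R5: "\<And>X. X \<subseteq> {1..n} \<Longrightarrow> R ({1..n} - X) = B - R X"
  shows "bool_mor_fin n k (\<lambda>X. en ` R X)"
  unfolding bool_mor_fin_def
proof (intro conjI allI impI)
  fix X assume X: "X \<subseteq> {1..n}"
  show "en ` R X \<subseteq> {1..k}" using R1[OF X] img by auto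
  show "en ` R ({1..n} - X) = {1..k} - en ` R X"
    using R5[OF X] R1[OF X] inj img by (simp add: inj_on_image_set_diff)
next
  show "en ` R {} = {}" using R2 by simp
  show "en ` R {1..n} = {1..k}" using R3 img by simp
next
  fix X Y assume XY: "X \<subseteq> {1..n} \<and> Y \<subseteq> {1..n}"
  show "en ` R (X \<inter> Y) = en ` R X \<inter> en ` R Y"
    using R4[of X Y] XY R1[of X] R1[of Y] inj by (simp add: inj_on_image_Int)
  show "en ` R (X \<union> Y) = en ` R X \<union> en ` R Y"
    using R4[of X Y] XY by (simp add: image_Un)
qed

context bea begin

lemma cospan:
  assumes m1: "mor n1 g1" and m2: "mor n2 g2"
  shows "\<exists>n g f1 f2. mor n g \<and> intR_arrow n1 g1 n g f1 \<and> intR_arrow n2 g2 n g f2"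
proof -
  define en where "en = (\<lambda>(i,j). i + n1*(j-1::nat))"
  define B where "B = {1..n1}\<times>{1..n2}"
  define k where "k = n1*n2"
  have inj: "inj_on en B" and img: "en ` B = {1..k}"
    using enc_inj enc_img unfolding en_def B_def k_def by auto
  define Sl where "Sl S j = {i\<in>{1..n1}. en (i,j) \<in> S}" for S j
  define G where "G S = J (\<lambda>j. mt (g1 (Sl S j)) (g2 {j})) n2" for S
  define f1 where "f1 X = en ` ((X \<times> {1..n2}) \<inter> B)" for X
  define f2 where "f2 Y = en ` (({1..n1} \<times> Y) \<inter> B)" for Y
  have Sl_img: "Sl (en ` (R \<inter> B)) j = {i\<in>{1..n1}. (i,j) \<in> R}" if j: "j \<in> {1..n2}" for R j
  proof -
    have "en (i,j) \<in> en ` (R \<inter> B) \<longleftrightarrow> (i,j) \<in> R" if "i \<in> {1..n1}" for i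
      using inj_on_image_mem_iff[OF inj, of "(i,j)" "R \<inter> B"] that j unfolding B_def by auto
    then show ?thesis unfolding Sl_def by auto
  qed
  have Sl_sub: "Sl S j \<subseteq> {1..n1}" for S j unfolding Sl_def by auto
  have g1in: "g1 (Sl S j) \<in> A" for S j using mor_in[OF m1 Sl_sub] .
  have g2in: "j \<in> {1..n2} \<Longrightarrow> g2 {j} \<in> A" for j using mor_in[OF m2] by auto
  have G_in: "G S \<in> A" for S unfolding G_def by (rule J_in) (use g1in g2in in auto)
  have g2sum: "J (\<lambda>j. g2 {j}) n2 = tp"
  proof -
    have "J (\<lambda>j. g2 {j}) n2 = J (\<lambda>j. if j \<in> {1..n2} then g2 {j} else bt) n2"
      by (rule J_cong) simp
    also have "\<dots> = g2 ({1..n2} \<inter> {1..n2})" by (rule J_mor[OF m2]) simp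
    finally show ?thesis using mor_top[OF m2] by simp
  qed
  have Sl_top: "Sl {1..k} j = {1..n1}" if "j \<in> {1..n2}" for j
    using img that unfolding Sl_def B_def by auto
  have Gmor: "mor k G"
  proof (rule mor_gen)
    show "G X \<in> A" for X by (rule G_in)
    have "G {1..k} = J (\<lambda>j. g2 {j}) n2"
      unfolding G_def
    proof (rule J_cong)
      fix j assume j: "j \<in> {1..n2}"
      show "mt (g1 (Sl {1..k} j)) (g2 {j}) = g2 {j}"
        unfolding Sl_top[OF j] mor_top[OF m1] using g2in[OF j] by simp
    qed
    then show "G {1..k} = tp" using g2sum by simp
  next
    fix S T assume S: "S \<subseteq> {1..k}" and T: "T \<subseteq> {1..k}" and ST: "S \<inter> T = {}"
    have SlU: "Sl (S \<union> T) j = Sl S j \<union> Sl T j" for j unfolding Sl_def by auto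
    have SlI: "Sl S j \<inter> Sl T j = {}" for j unfolding Sl_def using ST by auto
    have "G (S \<union> T) = J (\<lambda>j. jn (mt (g1 (Sl S j)) (g2 {j})) (mt (g1 (Sl T j)) (g2 {j}))) n2"
      unfolding G_def
    proof (rule J_cong)
      fix j assume j: "j \<in> {1..n2}"
      have "g1 (Sl (S \<union> T) j) = jn (g1 (Sl S j)) (g1 (Sl T j))"
        unfolding SlU by (rule mor_union[OF m1 Sl_sub Sl_sub])
      then show "mt (g1 (Sl (S \<union> T) j)) (g2 {j}) = jn (mt (g1 (Sl S j)) (g2 {j})) (mt (g1 (Sl T j)) (g2 {j}))"
        using g1in g2in j by (simp add: distrib2)
    qed
    also have "\<dots> = jn (G S) (G T)" unfolding G_def
      by (rule J_jn) (use g1in g2in in auto)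
    finally have U: "G (S \<union> T) = jn (G S) (G T)" .
    have M: "mt (G S) (G T) = bt" unfolding G_def
    proof (rule J_disj)
      fix j l assume j: "j \<in> {1..n2}" and l: "l \<in> {1..n2}"
      have "mt (mt (g1 (Sl S j)) (g2 {j})) (mt (g1 (Sl T l)) (g2 {l})) =
            mt (mt (g1 (Sl S j)) (g1 (Sl T l))) (mt (g2 {j}) (g2 {l}))"
        by (rule mt4) (use g1in g2in j l in auto)
      also have "\<dots> = bt"
      proof (cases "j = l")
        case True
        have "mt (g1 (Sl S j)) (g1 (Sl T l)) = g1 {}"
          using mor_meet[OF m1 Sl_sub Sl_sub, of S j T l] SlI True by simp
        then show ?thesis using mor_empty[OF m1] g2in j l by simp
      next
        case False
        have "mt (g2 {j}) (g2 {l}) = g2 {}"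
          using mor_meet[OF m2, of "{j}" "{l}"] j l False by simp
        then show ?thesis using mor_empty[OF m2] g1in g1in by simp
      qed
      finally show "mt (mt (g1 (Sl S j)) (g2 {j})) (mt (g1 (Sl T l)) (g2 {l})) = bt" .
    qed (use g1in g2in in auto)
    show "mt (G S) (G T) = bt \<and> G (S \<union> T) = jn (G S) (G T)" using U M by simp
  qed
  have a1: "intR_arrow n1 g1 k G f1"
    unfolding intR_arrow_def
  proof (intro conjI allI impI)
    show "bool_mor_fin n1 k f1" unfolding f1_def
      by (rule bool_mor_img[OF inj img]) (auto simp: B_def)
    fix X assume X: "X \<subseteq> {1..n1}"
    have "G (f1 X) = J (\<lambda>j. mt (g1 X) (g2 {j})) n2"
      unfolding G_def
    proof (rule J_cong)
      fix j assume j: "j \<in> {1..n2}"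
      have "Sl (f1 X) j = X" unfolding f1_def using Sl_img[OF j] X j by auto
      then show "mt (g1 (Sl (f1 X) j)) (g2 {j}) = mt (g1 X) (g2 {j})" by simp
    qed
    also have "\<dots> = mt (g1 X) (J (\<lambda>j. g2 {j}) n2)"
      by (rule J_mt) (use mor_in[OF m1 X] g2in in auto)
    also have "\<dots> = g1 X" using g2sum mor_in[OF m1 X] by simp
    finally show "G (f1 X) = g1 X" .
  qed
  have a2: "intR_arrow n2 g2 k G f2"
    unfolding intR_arrow_def
  proof (intro conjI allI impI)
    show "bool_mor_fin n2 k f2" unfolding f2_def
      by (rule bool_mor_img[OF inj img]) (auto simp: B_def)
    fix Y assume Y: "Y \<subseteq> {1..n2}"
    have "G (f2 Y) = J (\<lambda>j. if j \<in> Y then g2 {j} else bt) n2"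
      unfolding G_def
    proof (rule J_cong)
      fix j assume j: "j \<in> {1..n2}"
      have "Sl (f2 Y) j = (if j \<in> Y then {1..n1} else {})" unfolding f2_def using Sl_img[OF j] by auto
      then show "mt (g1 (Sl (f2 Y) j)) (g2 {j}) = (if j \<in> Y then g2 {j} else bt)"
        using mor_top[OF m1] mor_empty[OF m1] g2in[OF j] by simp
    qed
    also have "\<dots> = g2 (Y \<inter> {1..n2})" by (rule J_mor[OF m2]) simp
    finally show "G (f2 Y) = g2 Y" using Y by (simp add: Int_absorb2)
  qed
  show ?thesis using Gmor a1 a2 by blast
qed

end


context bea begin

lemma mor_zero_atoms:
  assumes m: "mor n h" and T: "T \<subseteq> {1..n}" and z: "\<And>j. j \<in> T \<Longrightarrow> h {j} = bt"
  shows "h T = bt"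
proof -
  have "finite T" using T finite_subset by blast
  then show ?thesis using T z
  proof (induction T rule: finite_induct)
    case empty then show ?case using mor_empty[OF m] by simp
  next
    case (insert a F)
    have "h ({a} \<union> F) = jn (h {a}) (h F)"
      by (rule mor_disj(2)[OF m]) (use insert in auto)
    then show ?case using insert by simp
  qed
qed

lemma coeq:
  assumes mg: "mor n g" and mh: "mor m h" and a1: "intR_arrow n g m h f1" and a2: "intR_arrow n g m h f2"
  shows "\<exists>k l q. mor k l \<and> intR_arrow m h k l q \<and> (\<forall>X. X \<subseteq> {1..n} \<longrightarrow> q (f1 X) = q (f2 X))"
proof -
  define N where "N = {j\<in>{1..m}. h {j} \<noteq> bt}"
  have hN: "h S = h (S \<inter> N)" if S: "S \<subseteq> {1..m}" for S
  proof -
    have "h ((S \<inter> N) \<union> (S - N)) = jn (h (S \<inter> N)) (h (S - N))"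
      by (rule mor_union[OF mh]) (use S in auto)
    moreover have "h (S - N) = bt" by (rule mor_zero_atoms[OF mh]) (use S in \<open>auto simp: N_def\<close>)
    moreover have "(S \<inter> N) \<union> (S - N) = S" by blast
    moreover have "h (S \<inter> N) \<in> A" by (rule mor_in[OF mh]) (use S in auto)
    ultimately show ?thesis by simp
  qed
  have f1s: "f1 X \<subseteq> {1..m}" and f2s: "f2 X \<subseteq> {1..m}" if "X \<subseteq> {1..n}" for X
    using a1 a2 that unfolding intR_arrow_def bool_mor_fin_def by auto
  have hf: "h (f1 X) = h (f2 X)" if "X \<subseteq> {1..n}" for X
    using a1 a2 that unfolding intR_arrow_def by auto
  have key: "False" if j: "j \<in> N" and X: "X \<subseteq> {1..n}" and in1: "j \<in> fa X" and in2: "j \<notin> fb X"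
     and fa: "fa X \<subseteq> {1..m}" and fb: "fb X \<subseteq> {1..m}" and e: "h (fa X) = h (fb X)" for j X fa fb
  proof -
    have jm: "{j} \<subseteq> {1..m}" using j unfolding N_def by auto
    have "h {j} = h ({j} \<inter> fa X)" using in1 by (simp add: Int_absorb2)
    also have "\<dots> = mt (h {j}) (h (fa X))" by (rule mor_meet[OF mh jm fa])
    also have "\<dots> = mt (h {j}) (h (fb X))" using e by simp
    also have "\<dots> = h ({j} \<inter> fb X)" by (rule mor_meet[OF mh jm fb, symmetric])
    also have "\<dots> = bt" using in2 mor_empty[OF mh] by simp
    finally show False using j unfolding N_def by auto
  qed
  have same: "j \<in> f1 X \<longleftrightarrow> j \<in> f2 X" if "j \<in> N" "X \<subseteq> {1..n}" for j X
    using key[of j X f1 f2] key[of j X f2 f1] that f1s f2s hf by metis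
  show ?thesis
  proof (cases "N = {}")
    case True
    have hb: "h S = bt" if "S \<subseteq> {1..m}" for S using hN[OF that] True mor_empty[OF mh] by simp
    have tb: "tp = bt" using hb[of "{1..m}"] mor_top[OF mh] by simp
    have "mor 0 (\<lambda>_. bt)" by (rule mor_gen) (use tb in auto)
    moreover have "intR_arrow m h 0 (\<lambda>_. bt) (\<lambda>_. {})"
      unfolding intR_arrow_def bool_mor_fin_def using hb by auto
    ultimately show ?thesis by blast
  next
    case False
    then obtain j0 where j0: "j0 \<in> N" by blast
    define r where "r j = (if j \<in> N then j else j0)" for j
    have rN: "r j \<in> N" for j using j0 unfolding r_def by auto
    have rm: "r j \<in> {1..m}" for j using rN unfolding N_def by auto
    define q where "q S = {j\<in>{1..m}. r j \<in> S}" for S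
    have bq: "bool_mor_fin m m q" unfolding bool_mor_fin_def q_def using rm by auto
    have hq: "h (q X) = h X" if X: "X \<subseteq> {1..m}" for X
    proof -
      have "q X \<inter> N = X \<inter> N" unfolding q_def r_def N_def using X by auto
      moreover have "q X \<subseteq> {1..m}" unfolding q_def by auto
      ultimately show ?thesis using hN[OF X] hN[of "q X"] by simp
    qed
    have "intR_arrow m h m h q" unfolding intR_arrow_def using bq hq by auto
    moreover have "q (f1 X) = q (f2 X)" if "X \<subseteq> {1..n}" for X
      unfolding q_def using same[OF rN that] by auto
    ultimately show ?thesis using mh by blast
  qed
qed

lemma nonempty: "mor 1 (\<lambda>S. if 1 \<in> S then tp else bt)"
proof (rule mor_gen)
  fix X Y :: "nat set"
  assume "X \<inter> Y = {}"
  then have "1 \<notin> X \<or> 1 \<notin> Y" by blast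
  then show "mt (if 1 \<in> X then tp else bt) (if 1 \<in> Y then tp else bt) = bt \<and>
        (if 1 \<in> X \<union> Y then tp else bt) = jn (if 1 \<in> X then tp else bt) (if 1 \<in> Y then tp else bt)"
    by (cases "1 \<in> X"; cases "1 \<in> Y") auto
qed auto

end

lemma bool_filtered:
  assumes "is_boolean_EA A pl z u"
  shows "intR_filtered A pl u"
proof -
  obtain mt jn cp where b: "boolean_algebra_on A mt jn cp z u"
    and p: "\<forall>x\<in>A. \<forall>y\<in>A. pl x y = (if mt x y = z then Some (jn x y) else None)"
    using assms unfolding is_boolean_EA_def by blast
  interpret bea A mt jn cp z u pl
    by unfold_locales (use b p in auto)
  show ?thesis unfolding intR_filtered_def
  proof (intro conjI allI impI)
    show "\<exists>n g. ea_mor_fin A pl u n g" using nonempty by blast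
  next
    fix n1 g1 n2 g2 assume "ea_mor_fin A pl u n1 g1 \<and> ea_mor_fin A pl u n2 g2"
    then show "\<exists>n g f1 f2. ea_mor_fin A pl u n g \<and> intR_arrow n1 g1 n g f1 \<and> intR_arrow n2 g2 n g f2"
      using cospan by blast
  next
    fix n g m h f1 f2
    assume "ea_mor_fin A pl u n g \<and> ea_mor_fin A pl u m h \<and> intR_arrow n g m h f1 \<and> intR_arrow n g m h f2"
    then show "\<exists>k l q. ea_mor_fin A pl u k l \<and> intR_arrow m h k l q \<and> (\<forall>X. X \<subseteq> {1..n} \<longrightarrow> q (f1 X) = q (f2 X))"
      using coeq by blast
  qed
qed


locale ea =
  fixes A :: "'a set" and pl :: "'a \<Rightarrow> 'a \<Rightarrow> 'a option" and z u :: 'a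
  assumes ea: "effect_algebra A pl z u"
begin

lemma ea': "z \<in> A \<and> u \<in> A \<and>
     (\<forall>a\<in>A. \<forall>b\<in>A. \<forall>c. pl a b = Some c \<longrightarrow> c \<in> A) \<and>
     (\<forall>a\<in>A. \<forall>b\<in>A. \<forall>c. pl a b = Some c \<longrightarrow> pl b a = Some c) \<and>
     (\<forall>a\<in>A. \<forall>b\<in>A. \<forall>c\<in>A. \<forall>d e. pl a b = Some d \<and> pl d c = Some e \<longrightarrow>
        (\<exists>f. pl b c = Some f \<and> pl a f = Some e)) \<and>
     (\<forall>a\<in>A. \<exists>!b. b \<in> A \<and> pl a b = Some u) \<and>
     (\<forall>a\<in>A. pl a u \<noteq> None \<longrightarrow> a = z)"
  using ea unfolding effect_algebra_def .

lemma z_in[simp]: "z \<in> A" using ea' by simp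
lemma u_in[simp]: "u \<in> A" using ea' by simp
lemma cl: "a \<in> A \<Longrightarrow> b \<in> A \<Longrightarrow> pl a b = Some c \<Longrightarrow> c \<in> A"
  using ea'[THEN conjunct2, THEN conjunct2, THEN conjunct1] by blast
lemma comm0: "a \<in> A \<Longrightarrow> b \<in> A \<Longrightarrow> pl a b = Some c \<Longrightarrow> pl b a = Some c"
  using ea'[THEN conjunct2, THEN conjunct2, THEN conjunct2, THEN conjunct1] by blast
lemma assoc: "a \<in> A \<Longrightarrow> b \<in> A \<Longrightarrow> c \<in> A \<Longrightarrow> pl a b = Some d \<Longrightarrow> pl d c = Some e \<Longrightarrow>
     \<exists>f. pl b c = Some f \<and> pl a f = Some e"
  using ea'[THEN conjunct2, THEN conjunct2, THEN conjunct2, THEN conjunct2, THEN conjunct1] by blast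
lemma E3: "a \<in> A \<Longrightarrow> \<exists>!b. b \<in> A \<and> pl a b = Some u"
  using ea'[THEN conjunct2, THEN conjunct2, THEN conjunct2, THEN conjunct2, THEN conjunct2, THEN conjunct1] by blast
lemma E4: "a \<in> A \<Longrightarrow> pl a u \<noteq> None \<Longrightarrow> a = z"
  using ea'[THEN conjunct2, THEN conjunct2, THEN conjunct2, THEN conjunct2, THEN conjunct2, THEN conjunct2] by blast

lemma comm: "a \<in> A \<Longrightarrow> b \<in> A \<Longrightarrow> pl a b = pl b a"
  by (cases "pl a b"; cases "pl b a") (auto dest: comm0)

definition ort where "ort a = (THE b. b \<in> A \<and> pl a b = Some u)"

lemma ort: "a \<in> A \<Longrightarrow> ort a \<in> A \<and> pl a (ort a) = Some u"
  unfolding ort_def by (rule theI') (rule E3)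

lemma ort_in[simp]: "a \<in> A \<Longrightarrow> ort a \<in> A" and ort_pl: "a \<in> A \<Longrightarrow> pl a (ort a) = Some u"
  using ort by auto

lemma ort_uniq: "a \<in> A \<Longrightarrow> b \<in> A \<Longrightarrow> pl a b = Some u \<Longrightarrow> b = ort a"
  using E3 ort by blast

lemma ort_ort[simp]: "a \<in> A \<Longrightarrow> ort (ort a) = a"
proof -
  assume a: "a \<in> A"
  have "pl (ort a) a = Some u" using comm0[OF a ort_in[OF a] ort_pl[OF a]] .
  then show "ort (ort a) = a" using ort_uniq[OF ort_in[OF a] a] by simp
qed

lemma pl_u_z: "pl u z = Some u"
proof -
  have "pl u (ort u) = Some u" using ort_pl[of u] by simp
  then have "pl (ort u) u = Some u" using comm0[of u "ort u" u] by simp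
  then have "ort u = z" using E4[of "ort u"] by simp
  then show ?thesis using ort_pl[of u] by simp
qed

lemma pl_z_r: assumes a: "a \<in> A" shows "pl a z = Some a"
proof -
  have oa: "pl (ort a) z = Some (ort a)" if a: "a \<in> A" for a
  proof -
    have "\<exists>f. pl (ort a) z = Some f \<and> pl a f = Some u"
      by (rule assoc[of a "ort a" z u u]) (use ort_pl[OF a] pl_u_z a in simp_all)
    then obtain f where f: "pl (ort a) z = Some f" "pl a f = Some u" by blast
    have "f \<in> A" using cl[OF _ _ f(1)] a by simp
    then have "f = ort a" using ort_uniq[OF a _ f(2)] by simp
    then show ?thesis using f by simp
  qed
  have "pl (ort (ort a)) z = Some (ort (ort a))" using oa[of "ort a"] a by simp
  then show ?thesis using a by simp
qed

lemma pl_z_l: assumes a: "a \<in> A" shows "pl z a = Some a"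
  using pl_z_r[OF a] comm0[of a z a] a by simp

lemma assoc2: "a \<in> A \<Longrightarrow> b \<in> A \<Longrightarrow> c \<in> A \<Longrightarrow> pl b c = Some f \<Longrightarrow> pl a f = Some e \<Longrightarrow>
     \<exists>d. pl a b = Some d \<and> pl d c = Some e"
proof -
  assume a: "a \<in> A" and b: "b \<in> A" and c: "c \<in> A" and bc: "pl b c = Some f" and af: "pl a f = Some e"
  have fA: "f \<in> A" using cl[OF b c bc] .
  have cb: "pl c b = Some f" using comm0[OF b c bc] .
  have fa: "pl f a = Some e" using comm0[OF a fA af] .
  obtain d where d: "pl b a = Some d" "pl c d = Some e" using assoc[OF c b a cb fa] by blast
  have dA: "d \<in> A" using cl[OF b a d(1)] .
  have "pl a b = Some d" using comm0[OF b a d(1)] .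
  moreover have "pl d c = Some e" using comm0[OF c dA d(2)] .
  ultimately show ?thesis by blast
qed

abbreviation mor where "mor n g \<equiv> ea_mor_fin A pl u n g"

lemma mor_in: "mor n g \<Longrightarrow> X \<subseteq> {1..n} \<Longrightarrow> g X \<in> A"
  unfolding ea_mor_fin_def by auto

lemma mor_top: "mor n g \<Longrightarrow> g {1..n} = u"
  unfolding ea_mor_fin_def by auto

lemma mor_add: "mor n g \<Longrightarrow> X \<subseteq> {1..n} \<Longrightarrow> Y \<subseteq> {1..n} \<Longrightarrow> X \<inter> Y = {} \<Longrightarrow> pl (g X) (g Y) = Some (g (X \<union> Y))"
  unfolding ea_mor_fin_def by auto

lemma mor_empty: assumes m: "mor n g" shows "g {} = z"
proof -
  have "pl (g {}) (g {1..n}) = Some (g {1..n})" using mor_add[OF m, of "{}" "{1..n}"] by simp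
  then show ?thesis using E4[of "g {}"] mor_in[OF m, of "{}"] mor_top[OF m] by auto
qed

lemma mor_compl: assumes m: "mor n g" and X: "X \<subseteq> {1..n}" shows "g ({1..n} - X) = ort (g X)"
proof -
  have "pl (g X) (g ({1..n} - X)) = Some (g (X \<union> ({1..n} - X)))" by (rule mor_add[OF m X]) auto
  moreover have "X \<union> ({1..n} - X) = {1..n}" using X by blast
  ultimately have "pl (g X) (g ({1..n} - X)) = Some u" using mor_top[OF m] by simp
  then show ?thesis using ort_uniq mor_in[OF m] X by blast
qed

lemma mor_gen:
  assumes "\<And>X. X \<subseteq> {1..n} \<Longrightarrow> g X \<in> A" "g {1..n} = u"
   "\<And>X Y. X \<subseteq> {1..n} \<Longrightarrow> Y \<subseteq> {1..n} \<Longrightarrow> X \<inter> Y = {} \<Longrightarrow> pl (g X) (g Y) = Some (g (X \<union> Y))"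
  shows "mor n g"
  unfolding ea_mor_fin_def using assms by auto

lemma bool_comp: "bool_mor_fin n m f \<Longrightarrow> bool_mor_fin m k q \<Longrightarrow> bool_mor_fin n k (q \<circ> f)"
  unfolding bool_mor_fin_def by auto

lemma mor_comp: assumes m: "mor m h" and f: "bool_mor_fin n m f" shows "mor n (h \<circ> f)"
proof (rule mor_gen)
  have fs: "X \<subseteq> {1..n} \<Longrightarrow> f X \<subseteq> {1..m}" for X using f unfolding bool_mor_fin_def by auto
  show "X \<subseteq> {1..n} \<Longrightarrow> (h \<circ> f) X \<in> A" for X using mor_in[OF m fs] by simp
  show "(h \<circ> f) {1..n} = u" using f mor_top[OF m] unfolding bool_mor_fin_def by simp
  fix X Y assume X: "X \<subseteq> {1..n}" and Y: "Y \<subseteq> {1..n}" and XY: "X \<inter> Y = {}"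
  have "f X \<inter> f Y = {}" using f X Y XY unfolding bool_mor_fin_def by metis
  moreover have "f (X \<union> Y) = f X \<union> f Y" using f X Y unfolding bool_mor_fin_def by metis
  ultimately show "pl ((h \<circ> f) X) ((h \<circ> f) Y) = Some ((h \<circ> f) (X \<union> Y))"
    using mor_add[OF m fs[OF X] fs[OF Y]] by simp
qed

lemma arrow_comp: "intR_arrow n g m h f \<Longrightarrow> intR_arrow m h k l q \<Longrightarrow> intR_arrow n g k l (q \<circ> f)"
  unfolding intR_arrow_def using bool_comp unfolding bool_mor_fin_def by auto

lemma arrow_sub: "intR_arrow n g m h f \<Longrightarrow> X \<subseteq> {1..n} \<Longrightarrow> f X \<subseteq> {1..m}"
  unfolding intR_arrow_def bool_mor_fin_def by auto

lemma arrow_val: "intR_arrow n g m h f \<Longrightarrow> X \<subseteq> {1..n} \<Longrightarrow> h (f X) = g X"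
  unfolding intR_arrow_def by auto

lemma arrow_int: "intR_arrow n g m h f \<Longrightarrow> X \<subseteq> {1..n} \<Longrightarrow> Y \<subseteq> {1..n} \<Longrightarrow> f (X \<inter> Y) = f X \<inter> f Y"
  unfolding intR_arrow_def bool_mor_fin_def by auto

lemma arrow_un: "intR_arrow n g m h f \<Longrightarrow> X \<subseteq> {1..n} \<Longrightarrow> Y \<subseteq> {1..n} \<Longrightarrow> f (X \<union> Y) = f X \<union> f Y"
  unfolding intR_arrow_def bool_mor_fin_def by auto

end


lemma sub12: "X \<subseteq> {1..2::nat} \<Longrightarrow> X = {} \<or> X = {1} \<or> X = {2} \<or> X = {1,2}"
proof -
  assume X: "X \<subseteq> {1..2::nat}"
  have "x \<in> X \<Longrightarrow> x = 1 \<or> x = 2" for x using X by auto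
  then show ?thesis by (cases "1 \<in> X"; cases "2 \<in> X") auto
qed

context ea begin

definition two :: "'a \<Rightarrow> nat set \<Rightarrow> 'a" where "two a S = (if 1 \<in> S then (if 2 \<in> S then u else a) else (if 2 \<in> S then ort a else z))"

lemma two_mor: assumes a: "a \<in> A" shows "mor 2 (two a)"
proof (rule mor_gen)
  show "two a X \<in> A" for X unfolding two_def using a by auto
  show "two a {1..2} = u" unfolding two_def by simp
  fix X Y :: "nat set" assume X: "X \<subseteq> {1..2}" and Y: "Y \<subseteq> {1..2}" and XY: "X \<inter> Y = {}"
  have f: "pl a (ort a) = Some u" "pl (ort a) a = Some u" "pl z a = Some a" "pl a z = Some a"
    "pl z (ort a) = Some (ort a)" "pl (ort a) z = Some (ort a)" "pl z u = Some u" "pl u z = Some u" "pl z z = Some z"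
    using a ort_pl[OF a] comm0[OF a ort_in[OF a] ort_pl[OF a]] pl_z_l pl_z_r by auto
  show "pl (two a X) (two a Y) = Some (two a (X \<union> Y))"
    using sub12[OF X] sub12[OF Y] XY unfolding two_def by (elim disjE) (auto simp: f)
qed

definition three :: "'a \<Rightarrow> 'a \<Rightarrow> 'a \<Rightarrow> nat set \<Rightarrow> 'a" where "three x y e S =
  (if 1 \<in> S then (if 2 \<in> S then (if 3 \<in> S then u else e) else (if 3 \<in> S then ort y else x))
   else (if 2 \<in> S then (if 3 \<in> S then ort x else y) else (if 3 \<in> S then ort e else z)))"

lemma three_mor: assumes x: "x \<in> A" and y: "y \<in> A" and e: "pl x y = Some e" shows "mor 3 (three x y e)"
proof -
  have eA: "e \<in> A" using cl[OF x y e] .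
  define w where "w = ort e"
  have wA: "w \<in> A" unfolding w_def using eA by simp
  have ew: "pl e w = Some u" unfolding w_def using ort_pl[OF eA] .
  obtain f where f: "pl y w = Some f" "pl x f = Some u" using assoc[OF x y wA e ew] by blast
  have "f \<in> A" using cl[OF y wA f(1)] .
  then have yw: "pl y w = Some (ort x)" using ort_uniq[OF x _ f(2)] f(1) by simp
  have ye: "pl y x = Some e" using comm0[OF x y e] .
  obtain f' where f': "pl x w = Some f'" "pl y f' = Some u" using assoc[OF y x wA ye ew] by blast
  have "f' \<in> A" using cl[OF x wA f'(1)] .
  then have xw: "pl x w = Some (ort y)" using ort_uniq[OF y _ f'(2)] f'(1) by simp
  have facts: "pl x y = Some e" "pl y x = Some e" "pl x w = Some (ort y)" "pl w x = Some (ort y)"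
    "pl y w = Some (ort x)" "pl w y = Some (ort x)" "pl x (ort x) = Some u" "pl (ort x) x = Some u"
    "pl y (ort y) = Some u" "pl (ort y) y = Some u" "pl e w = Some u" "pl w e = Some u"
    using e ye xw yw ew comm0[OF x wA xw] comm0[OF y wA yw] comm0[OF eA wA ew]
      ort_pl[OF x] ort_pl[OF y] comm0[OF x ort_in[OF x] ort_pl[OF x]] comm0[OF y ort_in[OF y] ort_pl[OF y]]
    by auto
  have zs: "pl z v = Some v" "pl v z = Some v" if "v \<in> A" for v using pl_z_l pl_z_r that by auto
  show ?thesis
  proof (rule mor_gen)
    show "three x y e X \<in> A" for X unfolding three_def using x y eA by auto
    show "three x y e {1..3} = u" unfolding three_def by simp
    fix X Y :: "nat set" assume X: "X \<subseteq> {1..3}" and Y: "Y \<subseteq> {1..3}" and XY: "X \<inter> Y = {}"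
    have d: "\<not> (1 \<in> X \<and> 1 \<in> Y)" "\<not> (2 \<in> X \<and> 2 \<in> Y)" "\<not> (3 \<in> X \<and> 3 \<in> Y)" using XY by blast+
    have m: "(k \<in> X \<union> Y) = (k \<in> X \<or> k \<in> Y)" for k by simp
    show "pl (three x y e X) (three x y e Y) = Some (three x y e (X \<union> Y))"
      unfolding three_def m
      using d by (cases "1 \<in> X"; cases "2 \<in> X"; cases "3 \<in> X"; cases "1 \<in> Y"; cases "2 \<in> Y"; cases "3 \<in> Y")
        (simp_all add: facts zs x y eA wA w_def[symmetric])
  qed
qed

end

definition sig :: "nat \<Rightarrow> nat set \<Rightarrow> nat set \<Rightarrow> nat set" where
  "sig n S X = (if 1 \<in> X then S else {}) \<union> (if 2 \<in> X then {1..n} - S else {})"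

lemma sig_bool: assumes S: "S \<subseteq> {1..n}" shows "bool_mor_fin 2 n (sig n S)"
  unfolding bool_mor_fin_def
proof (intro conjI allI impI)
  fix X :: "nat set" assume X: "X \<subseteq> {1..2}"
  show "sig n S X \<subseteq> {1..n}" unfolding sig_def using S by auto
  show "sig n S ({1..2} - X) = {1..n} - sig n S X"
    using sub12[OF X] S unfolding sig_def by (elim disjE) auto
next
  show "sig n S {} = {}" unfolding sig_def by simp
  show "sig n S {1..2} = {1..n}" unfolding sig_def using S by auto
next
  fix X Y :: "nat set" assume XY: "X \<subseteq> {1..2} \<and> Y \<subseteq> {1..2}"
  then have X: "X \<subseteq> {1..2}" and Y: "Y \<subseteq> {1..2}" by auto
  show "sig n S (X \<inter> Y) = sig n S X \<inter> sig n S Y"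
    using sub12[OF X] sub12[OF Y] S unfolding sig_def by (elim disjE) auto
  show "sig n S (X \<union> Y) = sig n S X \<union> sig n S Y"
    using sub12[OF X] sub12[OF Y] S unfolding sig_def by (elim disjE) auto
qed

locale fea = ea +
  assumes F: "intR_filtered A pl u"
begin

lemma F2: "mor n1 g1 \<Longrightarrow> mor n2 g2 \<Longrightarrow> \<exists>n g f1 f2. mor n g \<and> intR_arrow n1 g1 n g f1 \<and> intR_arrow n2 g2 n g f2"
  using F unfolding intR_filtered_def by blast

lemma F3: "mor n g \<Longrightarrow> mor m h \<Longrightarrow> intR_arrow n g m h f1 \<Longrightarrow> intR_arrow n g m h f2 \<Longrightarrow>
  \<exists>k l q. mor k l \<and> intR_arrow m h k l q \<and> (\<forall>X. X \<subseteq> {1..n} \<longrightarrow> q (f1 X) = q (f2 X))"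
  using F unfolding intR_filtered_def by blast

lemma sig_arrow: assumes m: "mor n h" and S: "S \<subseteq> {1..n}" and a: "h S = a"
  shows "intR_arrow 2 (two a) n h (sig n S)"
  unfolding intR_arrow_def
proof (intro conjI allI impI)
  show "bool_mor_fin 2 n (sig n S)" by (rule sig_bool[OF S])
  fix X :: "nat set" assume X: "X \<subseteq> {1..2}"
  have c: "h ({1..n} - S) = ort a" using mor_compl[OF m S] a by simp
  have t: "h (S \<union> ({1..n} - S)) = u" using S mor_top[OF m] by (simp add: Un_absorb1)
  show "h (sig n S X) = two a X"
    using sub12[OF X] unfolding sig_def two_def by (elim disjE) (simp_all add: a c[simplified] t[simplified] mor_empty[OF m])
qed

lemma U1: assumes m: "mor n h" and S: "S \<subseteq> {1..n}" and T: "T \<subseteq> {1..n}" and e: "h S = h T"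
  shows "\<exists>k l q. mor k l \<and> intR_arrow n h k l q \<and> q S = q T"
proof -
  have a: "h S \<in> A" using mor_in[OF m S] .
  have s1: "intR_arrow 2 (two (h S)) n h (sig n S)" by (rule sig_arrow[OF m S]) simp
  have s2: "intR_arrow 2 (two (h S)) n h (sig n T)" by (rule sig_arrow[OF m T]) (simp add: e)
  obtain k l q where q: "mor k l" "intR_arrow n h k l q" "\<forall>X. X \<subseteq> {1..2} \<longrightarrow> q (sig n S X) = q (sig n T X)"
    using F3[OF two_mor[OF a] m s1 s2] by blast
  have "q (sig n S {1}) = q (sig n T {1})" using q(3) by simp
  then have "q S = q T" unfolding sig_def by simp
  then show ?thesis using q by blast
qed

lemma U2:
  assumes m: "mor k g" and m': "mor k' g'" and X1: "X1 \<subseteq> {1..k}" and X2: "X2 \<subseteq> {1..k}"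
    and Y1: "Y1 \<subseteq> {1..k'}" and Y2: "Y2 \<subseteq> {1..k'}" and e1: "g X1 = g' Y1" and e2: "g X2 = g' Y2"
  shows "\<exists>K G f f'. mor K G \<and> intR_arrow k g K G f \<and> intR_arrow k' g' K G f' \<and> f X1 = f' Y1 \<and> f X2 = f' Y2"
proof -
  obtain N h a1 a2 where c: "mor N h" "intR_arrow k g N h a1" "intR_arrow k' g' N h a2"
    using F2[OF m m'] by blast
  have "h (a1 X1) = h (a2 Y1)" using arrow_val[OF c(2) X1] arrow_val[OF c(3) Y1] e1 by simp
  then obtain N1 h1 q1 where q1: "mor N1 h1" "intR_arrow N h N1 h1 q1" "q1 (a1 X1) = q1 (a2 Y1)"
    using U1[OF c(1) arrow_sub[OF c(2) X1] arrow_sub[OF c(3) Y1]] by blast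
  have b1: "intR_arrow k g N1 h1 (q1 \<circ> a1)" by (rule arrow_comp[OF c(2) q1(2)])
  have b2: "intR_arrow k' g' N1 h1 (q1 \<circ> a2)" by (rule arrow_comp[OF c(3) q1(2)])
  have "h1 ((q1 \<circ> a1) X2) = h1 ((q1 \<circ> a2) Y2)" using arrow_val[OF b1 X2] arrow_val[OF b2 Y2] e2 by simp
  then obtain N2 h2 q2 where q2: "mor N2 h2" "intR_arrow N1 h1 N2 h2 q2" "q2 ((q1 \<circ> a1) X2) = q2 ((q1 \<circ> a2) Y2)"
    using U1[OF q1(1) arrow_sub[OF b1 X2] arrow_sub[OF b2 Y2]] by blast
  have d1: "intR_arrow k g N2 h2 (q2 \<circ> (q1 \<circ> a1))" by (rule arrow_comp[OF b1 q2(2)])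
  have d2: "intR_arrow k' g' N2 h2 (q2 \<circ> (q1 \<circ> a2))" by (rule arrow_comp[OF b2 q2(2)])
  have "(q2 \<circ> (q1 \<circ> a1)) X1 = (q2 \<circ> (q1 \<circ> a2)) Y1" using q1(3) by simp
  moreover have "(q2 \<circ> (q1 \<circ> a1)) X2 = (q2 \<circ> (q1 \<circ> a2)) Y2" using q2(3) by simp
  ultimately show ?thesis using q2(1) d1 d2 by blast
qed

lemma rep1: "a \<in> A \<Longrightarrow> \<exists>n g X. mor n g \<and> X \<subseteq> {1..n} \<and> g X = a"
  using two_mor[of a] by (intro exI[of _ 2] exI[of _ "two a"] exI[of _ "{1}"]) (auto simp: two_def)

lemma rep3:
  assumes a: "a \<in> A" and b: "b \<in> A" and c: "c \<in> A"
  shows "\<exists>n g X Y W. mor n g \<and> X \<subseteq> {1..n} \<and> Y \<subseteq> {1..n} \<and> W \<subseteq> {1..n} \<and> g X = a \<and> g Y = b \<and> g W = c"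
proof -
  obtain n1 g1 X1 where r1: "mor n1 g1" "X1 \<subseteq> {1..n1}" "g1 X1 = a" using rep1[OF a] by blast
  obtain n2 g2 X2 where r2: "mor n2 g2" "X2 \<subseteq> {1..n2}" "g2 X2 = b" using rep1[OF b] by blast
  obtain n3 g3 X3 where r3: "mor n3 g3" "X3 \<subseteq> {1..n3}" "g3 X3 = c" using rep1[OF c] by blast
  obtain m h f1 f2 where s: "mor m h" "intR_arrow n1 g1 m h f1" "intR_arrow n2 g2 m h f2"
    using F2[OF r1(1) r2(1)] by blast
  obtain k l p p3 where t: "mor k l" "intR_arrow m h k l p" "intR_arrow n3 g3 k l p3"
    using F2[OF s(1) r3(1)] by blast
  have a1: "intR_arrow n1 g1 k l (p \<circ> f1)" by (rule arrow_comp[OF s(2) t(2)])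
  have a2: "intR_arrow n2 g2 k l (p \<circ> f2)" by (rule arrow_comp[OF s(3) t(2)])
  show ?thesis
    using t(1) arrow_sub[OF a1 r1(2)] arrow_sub[OF a2 r2(2)] arrow_sub[OF t(3) r3(2)]
      arrow_val[OF a1 r1(2)] arrow_val[OF a2 r2(2)] arrow_val[OF t(3) r3(2)] r1(3) r2(3) r3(3)
    by blast
qed

definition isrep where "isrep a b k g X Y \<longleftrightarrow> mor k g \<and> X \<subseteq> {1..k} \<and> Y \<subseteq> {1..k} \<and> g X = a \<and> g Y = b"

definition rep2 where "rep2 a b = (SOME (k, g, X, Y). isrep a b k g X Y)"

definition MT where "MT a b = (case rep2 a b of (k, g, X, Y) \<Rightarrow> g (X \<inter> Y))"
definition JN where "JN a b = (case rep2 a b of (k, g, X, Y) \<Rightarrow> g (X \<union> Y))"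

lemma Wlem:
  assumes m: "mor k g" and X: "X \<subseteq> {1..k}" and Y: "Y \<subseteq> {1..k}"
  shows "MT (g X) (g Y) = g (X \<inter> Y) \<and> JN (g X) (g Y) = g (X \<union> Y)"
proof -
  have "isrep (g X) (g Y) k g X Y" unfolding isrep_def using m X Y by simp
  then have "case rep2 (g X) (g Y) of (k, g', X', Y') \<Rightarrow> isrep (g X) (g Y) k g' X' Y'"
    unfolding rep2_def by (rule someI[where P = "\<lambda>(k, g', X', Y'). isrep (g X) (g Y) k g' X' Y'" and x = "(k, g, X, Y)", simplified])
  moreover obtain k' g' X' Y' where r: "rep2 (g X) (g Y) = (k', g', X', Y')" by (cases "rep2 (g X) (g Y)") auto
  ultimately have i: "mor k' g'" "X' \<subseteq> {1..k'}" "Y' \<subseteq> {1..k'}" "g' X' = g X" "g' Y' = g Y"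
    unfolding isrep_def by auto
  obtain K G f f' where c: "mor K G" "intR_arrow k g K G f" "intR_arrow k' g' K G f'" "f X = f' X'" "f Y = f' Y'"
    using U2[OF m i(1) X Y i(2) i(3)] i(4,5) by metis
  have XYi: "X \<inter> Y \<subseteq> {1..k}" using X by blast
  have XYu: "X \<union> Y \<subseteq> {1..k}" using X Y by blast
  have XYi': "X' \<inter> Y' \<subseteq> {1..k'}" using i(2) by blast
  have XYu': "X' \<union> Y' \<subseteq> {1..k'}" using i(2,3) by blast
  have "g (X \<inter> Y) = G (f (X \<inter> Y))" using arrow_val[OF c(2) XYi] by simp
  also have "\<dots> = G (f X \<inter> f Y)" using arrow_int[OF c(2) X Y] by simp
  also have "\<dots> = G (f' X' \<inter> f' Y')" using c(4,5) by simp
  also have "\<dots> = G (f' (X' \<inter> Y'))" using arrow_int[OF c(3) i(2) i(3)] by simp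
  also have "\<dots> = g' (X' \<inter> Y')" using arrow_val[OF c(3) XYi'] by simp
  finally have 1: "MT (g X) (g Y) = g (X \<inter> Y)" unfolding MT_def r by simp
  have "g (X \<union> Y) = G (f (X \<union> Y))" using arrow_val[OF c(2) XYu] by simp
  also have "\<dots> = G (f X \<union> f Y)" using arrow_un[OF c(2) X Y] by simp
  also have "\<dots> = G (f' X' \<union> f' Y')" using c(4,5) by simp
  also have "\<dots> = G (f' (X' \<union> Y'))" using arrow_un[OF c(3) i(2) i(3)] by simp
  also have "\<dots> = g' (X' \<union> Y')" using arrow_val[OF c(3) XYu'] by simp
  finally have 2: "JN (g X) (g Y) = g (X \<union> Y)" unfolding JN_def r by simp
  show ?thesis using 1 2 by simp
qed

end


context fea begin

lemma WM: "mor k g \<Longrightarrow> X \<subseteq> {1..k} \<Longrightarrow> Y \<subseteq> {1..k} \<Longrightarrow> MT (g X) (g Y) = g (X \<inter> Y)"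
  using Wlem by blast
lemma WJ: "mor k g \<Longrightarrow> X \<subseteq> {1..k} \<Longrightarrow> Y \<subseteq> {1..k} \<Longrightarrow> JN (g X) (g Y) = g (X \<union> Y)"
  using Wlem by blast

lemma ba_ok: "boolean_algebra_on A MT JN ort z u"
  unfolding boolean_algebra_on_def
proof (intro conjI ballI)
  show "z \<in> A" "u \<in> A" by simp_all
next
  fix x y assume x: "x \<in> A" and y: "y \<in> A"
  obtain k g X Y W where r: "mor k g" "X \<subseteq> {1..k}" "Y \<subseteq> {1..k}" "W \<subseteq> {1..k}" "g X = x" "g Y = y"
    using rep3[OF x y y] by blast
  have i: "X \<inter> Y \<subseteq> {1..k}" "X \<union> Y \<subseteq> {1..k}" using r by auto
  show "MT x y \<in> A" using WM[OF r(1-3)] mor_in[OF r(1) i(1)] r(5,6) by simp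
  show "JN x y \<in> A" using WJ[OF r(1-3)] mor_in[OF r(1) i(2)] r(5,6) by simp
  show "MT x y = MT y x" using WM[OF r(1-3)] WM[OF r(1) r(3) r(2)] r(5,6) by (simp add: Int_commute)
  show "JN x y = JN y x" using WJ[OF r(1-3)] WJ[OF r(1) r(3) r(2)] r(5,6) by (simp add: Un_commute)
  have "MT x (JN x y) = g (X \<inter> (X \<union> Y))" using WJ[OF r(1-3)] WM[OF r(1) r(2) i(2)] r(5,6) by simp
  then show "MT x (JN x y) = x" using r(5) by (simp add: Int_absorb)
  have "JN x (MT x y) = g (X \<union> (X \<inter> Y))" using WM[OF r(1-3)] WJ[OF r(1) r(2) i(1)] r(5,6) by simp
  then show "JN x (MT x y) = x" using r(5) by (simp add: Un_absorb)
next
  fix x assume x: "x \<in> A"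
  show "ort x \<in> A" using x by simp
  obtain k g X Y W where r: "mor k g" "X \<subseteq> {1..k}" "Y \<subseteq> {1..k}" "W \<subseteq> {1..k}" "g X = x"
    using rep3[OF x x x] by blast
  have e: "{} \<subseteq> {1..k}" and t: "{1..k} \<subseteq> {1..k}" and c: "{1..k} - X \<subseteq> {1..k}" by auto
  have ge: "g {} = z" using mor_empty[OF r(1)] .
  have gt: "g {1..k} = u" using mor_top[OF r(1)] .
  have gc: "g ({1..k} - X) = ort x" using mor_compl[OF r(1) r(2)] r(5) by simp
  show "JN x z = x" using WJ[OF r(1) r(2) e] ge r(5) by simp
  show "MT x u = x" using WM[OF r(1) r(2) t] gt r(5) r(2) by (simp add: Int_absorb2)
  show "MT x (ort x) = z" using WM[OF r(1) r(2) c] gc ge r(5) by (simp add: Int_Diff)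
  show "JN x (ort x) = u" using WJ[OF r(1) r(2) c] gc gt r(5) r(2) by (simp add: Un_Diff_cancel Un_absorb1)
next
  fix x y w assume x: "x \<in> A" and y: "y \<in> A" and w: "w \<in> A"
  obtain k g X Y W where r: "mor k g" "X \<subseteq> {1..k}" "Y \<subseteq> {1..k}" "W \<subseteq> {1..k}" "g X = x" "g Y = y" "g W = w"
    using rep3[OF x y w] by blast
  have i: "X \<inter> Y \<subseteq> {1..k}" "Y \<inter> W \<subseteq> {1..k}" "X \<union> Y \<subseteq> {1..k}" "Y \<union> W \<subseteq> {1..k}"
     "X \<inter> W \<subseteq> {1..k}" using r by auto
  have "MT (MT x y) w = g (X \<inter> Y \<inter> W)" using WM[OF r(1-3)] WM[OF r(1) i(1) r(4)] r by simp
  moreover have "MT x (MT y w) = g (X \<inter> (Y \<inter> W))" using WM[OF r(1) r(3) r(4)] WM[OF r(1) r(2) i(2)] r by simp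
  ultimately show "MT (MT x y) w = MT x (MT y w)" by (simp add: Int_assoc)
  have "JN (JN x y) w = g (X \<union> Y \<union> W)" using WJ[OF r(1-3)] WJ[OF r(1) i(3) r(4)] r by simp
  moreover have "JN x (JN y w) = g (X \<union> (Y \<union> W))" using WJ[OF r(1) r(3) r(4)] WJ[OF r(1) r(2) i(4)] r by simp
  ultimately show "JN (JN x y) w = JN x (JN y w)" by (simp add: Un_assoc)
  have "MT x (JN y w) = g (X \<inter> (Y \<union> W))" using WJ[OF r(1) r(3) r(4)] WM[OF r(1) r(2) i(4)] r by simp
  moreover have "JN (MT x y) (MT x w) = g ((X \<inter> Y) \<union> (X \<inter> W))"
    using WM[OF r(1-3)] WM[OF r(1) r(2) r(4)] WJ[OF r(1) i(1) i(5)] r by simp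
  ultimately show "MT x (JN y w) = JN (MT x y) (MT x w)" by (simp add: Int_Un_distrib)
qed

lemma pl_ok: assumes x: "x \<in> A" and y: "y \<in> A"
  shows "pl x y = (if MT x y = z then Some (JN x y) else None)"
proof (cases "pl x y")
  case (Some e)
  have m: "mor 3 (three x y e)" by (rule three_mor[OF x y Some])
  have s1: "{1} \<subseteq> {1..3::nat}" and s2: "{2} \<subseteq> {1..3::nat}" by auto
  have v1: "three x y e {1} = x" and v2: "three x y e {2} = y" unfolding three_def by simp_all
  have "MT x y = three x y e ({1} \<inter> {2})" using WM[OF m s1 s2] v1 v2 by simp
  then have "MT x y = z" unfolding three_def by simp
  moreover have "JN x y = three x y e ({1} \<union> {2})" using WJ[OF m s1 s2] v1 v2 by simp
  then have "JN x y = e" unfolding three_def by simp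
  ultimately show ?thesis using Some by simp
next
  case None
  have "MT x y \<noteq> z"
  proof
    assume mz: "MT x y = z"
    obtain k g X Y W where r: "mor k g" "X \<subseteq> {1..k}" "Y \<subseteq> {1..k}" "W \<subseteq> {1..k}" "g X = x" "g Y = y"
      using rep3[OF x y y] by blast
    have gz: "g (X \<inter> Y) = z" using WM[OF r(1-3)] r(5,6) mz by simp
    have d: "X - Y \<subseteq> {1..k}" "X \<inter> Y \<subseteq> {1..k}" using r by auto
    have "pl (g (X - Y)) (g (X \<inter> Y)) = Some (g ((X - Y) \<union> (X \<inter> Y)))"
      by (rule mor_add[OF r(1) d]) auto
    then have "pl (g (X - Y)) z = Some (g X)" using gz by (simp add: Un_Diff_Int)
    moreover have "pl (g (X - Y)) z = Some (g (X - Y))" using pl_z_r mor_in[OF r(1) d(1)] by simp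
    ultimately have gx: "g X = g (X - Y)" by simp
    have "pl (g (X - Y)) (g Y) = Some (g ((X - Y) \<union> Y))" by (rule mor_add[OF r(1) d(1) r(3)]) auto
    then show False using None gx r(5,6) by simp
  qed
  then show ?thesis using None by simp
qed

lemma filt_bool: "is_boolean_EA A pl z u"
  unfolding is_boolean_EA_def using ba_ok pl_ok by blast

end

theorem mainTheorem4:
  fixes A :: "'a set" and pl :: "'a \<Rightarrow> 'a \<Rightarrow> 'a option" and z u :: 'a
  assumes "effect_algebra A pl z u"
  shows "is_boolean_EA A pl z u \<longleftrightarrow> intR_filtered A pl u"
proof
  assume "is_boolean_EA A pl z u"
  then show "intR_filtered A pl u" by (rule bool_filtered)
next
  assume F: "intR_filtered A pl u"
  interpret fea A pl z u by unfold_locales (use assms F in auto)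
  show "is_boolean_EA A pl z u" by (rule filt_bool)
qed


end
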